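(* Suppose Assumption A (defined in the context) holds and $\Delta^k\le\Delta_{\max}$. If the interpolation set $\{z^0:=\theta^k,z^1,\ldots,z^d\}$ is $\Lambda$-poised in $B(\theta^k,\Delta^k)$ and for each $t=0,\ldots,d$ and each $i=1,\ldots,n$ we have $\|\tilde x_i(z^t)-\hat x_i(z^t)\|\le c(\Delta^k)^2$ for some $c>0$, then the corresponding models $M^k$ and $m^k$ are fully linear models for $r$ and $f$ respectively in $B(\theta^k,\Delta^k)$.
   Context: Let $n,d\ge1$, data $x_1,\ldots,x_n$, and maps $\theta\mapsto\hat x_i(\theta)$; set $r_i(\theta)=\|\hat x_i(\theta)-x_i\|$, $r=(r_1,\ldots,r_n):\mathbb{R}^d\to\mathbb{R}^n$, $f(\theta)=\frac1n\|r(\theta)\|^2$. Approximations $\tilde x_i(\theta)$ of $\hat x_i(\theta)$ give $\tilde r_i(\theta)=\|\tilde x_i(\theta)-x_i\|$, $\tilde f(\theta)=\frac1n\|\tilde r(\theta)\|^2$. Given $\theta^k$, $\Delta^k>0$ and points $z^0=\theta^k,z^1,\ldots,z^d$ with $z^t-\theta^k$ ($t\ge1$) linearly independent, let $J^k\in\mathbb{R}^{n\times d}$ be the unique matrix with $\tilde r(\theta^k)+J^k(z^t-\theta^k)=\tilde r(z^t)$, $t=1,\ldots,d$; $M^k(s)=\tilde r(\theta^k)+J^ks$, $m^k(s)=\frac1n\|M^k(s)\|^2$. The Lagrange polynomials of the set are the affine functions $\ell_t$, $t=0,\ldots,d$, with $\ell_t(z^s)=\delta_{s,t}$; the set is $\Lambda$-poised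 in $B(\theta^k,\Delta^k)$ ($\Lambda>0$) if $|\ell_t(\theta^k+s)|\le\Lambda$ for all $t$ and all $\|s\|\le\Delta^k$. $m^k$ is fully linear for $f$ in $B(\theta^k,\Delta^k)$ if there exist constants $\kappa_{\rm ef},\kappa_{\rm eg}>0$ independent of $\theta^k$ and $\Delta^k$ with $|f(\theta^k+s)-m^k(s)|\le\kappa_{\rm ef}(\Delta^k)^2$ and $\|\nabla f(\theta^k+s)-\nabla m^k(s)\|\le\kappa_{\rm eg}\Delta^k$ for all $\|s\|\le\Delta^k$; analogously $M^k$ is fully linear for $r$ if $\|r(\theta^k+s)-M^k(s)\|\le\kappa_{\rm ef}'(\Delta^k)^2$ and $\|\partial r(\theta^k+s)^T-J^k\|\le\kappa_{\rm eg}'\Delta^k$ for all $\|s\|\le\Delta^k$, with constants independent of $\theta^k,\Delta^k$. Assumption A: for given $\theta^0$ and $\Delta_{\max}>0$, the set $\mathcal{B}=\{z:\|z-\theta\|\le\Delta_{\max}\text{ for some }\theta\text{ with }f(\theta)\le f(\theta^0)\}$ is bounded and $r$ is continuously differentiable with $\partial r$ Lipschitz continuous (constant $L_J$) on $\mathcal{B}$; here $\theta^k$ is assumed to satisfy $f(\theta^k)\le f(\theta^0)$ (it is an iterate of a monotone method). *)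

theory Defs
  imports "HOL-Analysis.Analysis"
begin

text \<open>Residual vector r(theta) = (||xhat_i(theta) - x_i||)_i, indexed by a finite type 'n (n = CARD('n)).\<close>
definition resid :: "('n::finite \<Rightarrow> 'a \<Rightarrow> 'b::real_normed_vector) \<Rightarrow> ('n \<Rightarrow> 'b) \<Rightarrow> 'a \<Rightarrow> real^'n" where
  "resid xh x \<theta> = (\<chi> i. norm (xh i \<theta> - x i))"

text \<open>Objective f(theta) = (1/n) ||r(theta)||^2.\<close>
definition obj :: "('n::finite \<Rightarrow> 'a \<Rightarrow> 'b::real_normed_vector) \<Rightarrow> ('n \<Rightarrow> 'b) \<Rightarrow> 'a \<Rightarrow> real" where
  "obj xh x \<theta> = (1 / real CARD('n)) * (norm (resid xh x \<theta>))\<^sup>2"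

text \<open>The set B = { z : ||z - theta|| <= Delta_max for some theta with f(theta) <= f(theta0) }.\<close>
definition setB :: "('n::finite \<Rightarrow> real^'d \<Rightarrow> 'b::real_normed_vector) \<Rightarrow> ('n \<Rightarrow> 'b) \<Rightarrow> real^'d \<Rightarrow> real \<Rightarrow> (real^'d) set" where
  "setB xh x \<theta>0 Dmax = {z. \<exists>\<theta>. obj xh x \<theta> \<le> obj xh x \<theta>0 \<and> norm (z - \<theta>) \<le> Dmax}"

text \<open>Assumption A, with Dr the Jacobian (n x d matrix) of r.\<close>
definition assumptionA :: "('n::finite \<Rightarrow> real^'d \<Rightarrow> 'b::real_normed_vector) \<Rightarrow> ('n \<Rightarrow> 'b) \<Rightarrow> real^'d \<Rightarrow> real
    \<Rightarrow> (real^'d \<Rightarrow> real^'d^'n) \<Rightarrow> bool" where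
  "assumptionA xh x \<theta>0 Dmax Dr \<longleftrightarrow>
     bounded (setB xh x \<theta>0 Dmax) \<and>
     (\<forall>\<theta>\<in>setB xh x \<theta>0 Dmax. (resid xh x has_derivative (\<lambda>h. Dr \<theta> *v h)) (at \<theta>)) \<and>
     continuous_on (setB xh x \<theta>0 Dmax) Dr \<and>
     (\<exists>LJ. \<forall>a\<in>setB xh x \<theta>0 Dmax. \<forall>b\<in>setB xh x \<theta>0 Dmax. norm (Dr a - Dr b) \<le> LJ * norm (a - b))"

text \<open>J^k: the unique matrix with rtil(theta) + J (z^t - theta) = rtil(z^t), t = 1..d.\<close>
definition interpJ :: "(real^'d \<Rightarrow> real^'n) \<Rightarrow> real^'d \<Rightarrow> (nat \<Rightarrow> real^'d) \<Rightarrow> real^'d^'n" where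
  "interpJ rt \<theta> z = (THE J. \<forall>t\<in>{1..CARD('d)}. rt \<theta> + J *v (z t - \<theta>) = rt (z t))"

text \<open>Interpolation set {z^0,...,z^d}: z^0 = theta, z^t - theta (t=1..d) linearly independent.\<close>
definition interp_set :: "real^'d \<Rightarrow> (nat \<Rightarrow> real^'d) \<Rightarrow> bool" where
  "interp_set \<theta> z \<longleftrightarrow> z 0 = \<theta> \<and> inj_on (\<lambda>t. z t - \<theta>) {1..CARD('d)} \<and>
     independent ((\<lambda>t. z t - \<theta>) ` {1..CARD('d)})"

text \<open>Lagrange polynomials: affine functions l_t (t = 0..d) with l_t(z^s) = delta_{s,t}.\<close>
definition lagrange_polys :: "(nat \<Rightarrow> real^'d) \<Rightarrow> (nat \<Rightarrow> real^'d \<Rightarrow> real) \<Rightarrow> bool" where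
  "lagrange_polys z l \<longleftrightarrow> (\<forall>t\<le>CARD('d).
     (\<exists>a b. l t = (\<lambda>y. a \<bullet> y + b)) \<and> (\<forall>s\<le>CARD('d). l t (z s) = (if s = t then 1 else 0)))"

definition poised :: "real \<Rightarrow> real^'d \<Rightarrow> real \<Rightarrow> (nat \<Rightarrow> real^'d) \<Rightarrow> bool" where
  "poised \<Lambda> \<theta> \<Delta> z \<longleftrightarrow> (\<forall>l. lagrange_polys z l \<longrightarrow>
     (\<forall>t\<le>CARD('d). \<forall>s. norm s \<le> \<Delta> \<longrightarrow> \<bar>l t (\<theta> + s)\<bar> \<le> \<Lambda>))"

end

theory Submission imports Defs begin

lemma span_univ:
  fixes z :: "nat \<Rightarrow> real^'d"
  assumes "interp_set \<theta> z"
  shows "span ((\<lambda>t. z t - \<theta>) ` {1..CARD('d)}) = UNIV"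
proof -
  let ?V = "(\<lambda>t. z t - \<theta>) ` {1..CARD('d)}"
  have ind: "independent ?V" and inj: "inj_on (\<lambda>t. z t - \<theta>) {1..CARD('d)}"
    using assms unfolding interp_set_def by auto
  have "card ?V = CARD('d)" using card_image[OF inj] by simp
  then have "UNIV \<subseteq> span ?V"
    by (intro card_ge_dim_independent[OF _ ind]) auto
  then show ?thesis by auto
qed

lemma coords:
  fixes z :: "nat \<Rightarrow> real^'d"
  assumes "interp_set \<theta> z"
  shows "\<exists>g. (\<forall>t. linear (g t)) \<and>
     (\<forall>t\<in>{1..CARD('d)}. \<forall>s\<in>{1..CARD('d)}. g t (z s - \<theta>) = (if s = t then 1 else 0)) \<and>
     (\<forall>v. v = (\<Sum>t\<in>{1..CARD('d)}. g t v *\<^sub>R (z t - \<theta>)))"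
proof -
  let ?V = "(\<lambda>t. z t - \<theta>) ` {1..CARD('d)}"
  have ind: "independent ?V" and inj: "inj_on (\<lambda>t. z t - \<theta>) {1..CARD('d)}"
    using assms unfolding interp_set_def by auto
  define F where "F t b = (if b = z t - \<theta> then 1 else (0::real))" for t b
  define g where "g t = (SOME g::real^'d \<Rightarrow> real. linear g \<and> (\<forall>b\<in>?V. g b = F t b))" for t
  have ex: "\<exists>g::real^'d \<Rightarrow> real. linear g \<and> (\<forall>b\<in>?V. g b = F t b)" for t
    by (rule real_vector.linear_independent_extend[OF ind])
  have g: "\<And>t. linear (g t)" "\<And>t b. b \<in> ?V \<Longrightarrow> g t b = (if b = z t - \<theta> then 1 else 0)"
  proof -
    fix t
    show "linear (g t)" using someI_ex[OF ex[of t]] unfolding g_def by blast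
  next
    fix t b assume "b \<in> ?V"
    then show "g t b = (if b = z t - \<theta> then 1 else 0)"
      using someI_ex[OF ex[of t]] unfolding g_def F_def by blast
  qed
  have gd: "g t (z s - \<theta>) = (if s = t then 1 else 0)" if "t\<in>{1..CARD('d)}" "s\<in>{1..CARD('d)}" for t s
    using g(2)[of "z s - \<theta>" t] that inj_onD[OF inj, of s t] by auto
  have lin: "linear (\<lambda>v. \<Sum>t\<in>{1..CARD('d)}. g t v *\<^sub>R (z t - \<theta>))"
    by (intro linear_compose_sum) (auto intro: linear_compose[OF g(1) linear_scaleR_left, unfolded o_def])
  have "(\<Sum>t\<in>{1..CARD('d)}. g t v *\<^sub>R (z t - \<theta>)) = id v" for v
  proof (rule real_vector.linear_eq_on_span[OF lin linear_id])
    fix b assume "b \<in> ?V"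
    then obtain s where s: "s\<in>{1..CARD('d)}" "b = z s - \<theta>" by auto
    have "(\<Sum>t\<in>{1..CARD('d)}. g t b *\<^sub>R (z t - \<theta>)) = (\<Sum>t\<in>{1..CARD('d)}. (if t = s then z t - \<theta> else 0))"
      using gd s by (intro sum.cong) auto
    also have "\<dots> = b" using s by (simp add: sum.delta)
    finally show "(\<Sum>t\<in>{1..CARD('d)}. g t b *\<^sub>R (z t - \<theta>)) = id b" by simp
  next
    show "v \<in> span ?V" using span_univ[OF assms] by simp
  qed
  then show ?thesis using g(1) gd by (intro exI[of _ g]) auto
qed


lemma lin_inner:
  fixes f :: "real^'d \<Rightarrow> real"
  assumes "linear f"
  shows "f y = adjoint f 1 \<bullet> y"
  using adjoint_works[OF assms, of y 1] by (simp add: inner_commute)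

lemma poised_bound:
  fixes z :: "nat \<Rightarrow> real^'d"
  assumes iz: "interp_set \<theta> z" and P: "poised \<Lambda> \<theta> \<Delta> z"
    and g1: "\<forall>t. linear (g t)"
    and gd: "\<forall>t\<in>{1..CARD('d)}. \<forall>s\<in>{1..CARD('d)}. g t (z s - \<theta>) = (if s = t then 1 else 0)"
  shows "\<forall>t\<in>{1..CARD('d)}. \<forall>s. norm s \<le> \<Delta> \<longrightarrow> \<bar>g t s\<bar> \<le> \<Lambda>"
proof -
  define l where "l t y = (if t = 0 then 1 - (\<Sum>u\<in>{1..CARD('d)}. g u (y - \<theta>)) else g t (y - \<theta>))" for t y
  have z0: "z 0 = \<theta>" using iz unfolding interp_set_def by simp
  have g0: "g t 0 = 0" for t using g1 linear_0 by blast
  have gaff: "g t (y - \<theta>) = adjoint (g t) 1 \<bullet> y + (- (adjoint (g t) 1 \<bullet> \<theta>))" for t y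
    using lin_inner[of "g t" "y - \<theta>"] g1 by (simp add: inner_diff_right)
  have "lagrange_polys z l"
    unfolding lagrange_polys_def
  proof (intro allI impI)
    fix t :: nat assume t: "t \<le> CARD('d)"
    show "(\<exists>a b. l t = (\<lambda>y. a \<bullet> y + b)) \<and> (\<forall>s\<le>CARD('d). l t (z s) = (if s = t then 1 else 0))"
    proof (rule conjI)
    show "\<exists>a b. l t = (\<lambda>y. a \<bullet> y + b)"
    proof (cases "t = 0")
      case True
      show ?thesis
        by (rule exI[of _ "- (\<Sum>u\<in>{1..CARD('d)}. adjoint (g u) 1)"],
            rule exI[of _ "1 + (\<Sum>u\<in>{1..CARD('d)}. adjoint (g u) 1 \<bullet> \<theta>)"])
          (rule ext, simp add: l_def True gaff sum.distrib inner_sum_left sum_negf sum_subtractf)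
    next
      case False
      show ?thesis
        by (rule exI[of _ "adjoint (g t) 1"], rule exI[of _ "- (adjoint (g t) 1 \<bullet> \<theta>)"])
          (rule ext, simp add: l_def False gaff)
    qed
    show "\<forall>s\<le>CARD('d). l t (z s) = (if s = t then 1 else 0)"
    proof (intro allI impI)
      fix s assume s: "s \<le> CARD('d)"
      show "l t (z s) = (if s = t then 1 else 0)"
      proof (cases "s = 0")
        case True
        then show ?thesis by (simp add: l_def z0 g0)
      next
        case sF: False
        then have s1: "s \<in> {1..CARD('d)}" using s by auto
        show ?thesis
        proof (cases "t = 0")
          case True
          have "(\<Sum>u\<in>{1..CARD('d)}. g u (z s - \<theta>)) = (\<Sum>u\<in>{1..CARD('d)}. if u = s then 1 else 0)"
            using gd s1 by (intro sum.cong) auto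
          also have "\<dots> = 1" using s1 by (simp add: sum.delta')
          finally show ?thesis by (simp add: l_def True sF)
        next
          case False
          then have "t \<in> {1..CARD('d)}" using t by auto
          then show ?thesis using gd s1 False by (simp add: l_def)
        qed
      qed
    qed
    qed
  qed
  then have "\<forall>t\<le>CARD('d). \<forall>s. norm s \<le> \<Delta> \<longrightarrow> \<bar>l t (\<theta> + s)\<bar> \<le> \<Lambda>"
    using P unfolding poised_def by blast
  then show ?thesis by (auto simp: l_def)
qed

lemma interpJ_prop:
  fixes z :: "nat \<Rightarrow> real^'d" and rt :: "real^'d \<Rightarrow> real^'n"
  assumes iz: "interp_set \<theta> z"
  shows "\<forall>t\<in>{1..CARD('d)}. rt \<theta> + interpJ rt \<theta> z *v (z t - \<theta>) = rt (z t)"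
proof -
  obtain g where g1: "\<forall>t. linear (g t)"
    and gd: "\<forall>t\<in>{1..CARD('d)}. \<forall>s\<in>{1..CARD('d)}. g t (z s - \<theta>) = (if s = t then 1 else 0)"
    and gs: "\<forall>v. v = (\<Sum>t\<in>{1..CARD('d)}. g t v *\<^sub>R (z t - \<theta>))"
    using coords[OF iz] by blast
  let ?P = "\<lambda>J. \<forall>t\<in>{1..CARD('d)}. rt \<theta> + J *v (z t - \<theta>) = rt (z t)"
  define h where "h v = (\<Sum>t\<in>{1..CARD('d)}. g t v *\<^sub>R (rt (z t) - rt \<theta>))" for v
  have lin: "linear h" unfolding h_def
    by (intro linear_compose_sum) (auto intro: linear_compose[OF g1[rule_format] linear_scaleR_left, unfolded o_def])
  have ex: "?P (matrix h)"
  proof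
    fix s assume s: "s \<in> {1..CARD('d)}"
    have "matrix h *v (z s - \<theta>) = h (z s - \<theta>)" using matrix_vector_mul(2)[OF lin] by simp
    also have "\<dots> = (\<Sum>t\<in>{1..CARD('d)}. if t = s then rt (z t) - rt \<theta> else 0)"
      unfolding h_def using gd s by (intro sum.cong) auto
    also have "\<dots> = rt (z s) - rt \<theta>" using s by (simp add: sum.delta)
    finally show "rt \<theta> + matrix h *v (z s - \<theta>) = rt (z s)" by simp
  qed
  have un: "J = matrix h" if "?P J" for J
  proof -
    have "J *v v = matrix h *v v" for v
    proof -
      have "J *v v = J *v (\<Sum>t\<in>{1..CARD('d)}. g t v *\<^sub>R (z t - \<theta>))" using gs by metis
      also have "\<dots> = (\<Sum>t\<in>{1..CARD('d)}. g t v *\<^sub>R (J *v (z t - \<theta>)))"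
        by (simp add: linear_sum[OF matrix_vector_mul_linear] matrix_vector_mult_scaleR)
      also have "\<dots> = (\<Sum>t\<in>{1..CARD('d)}. g t v *\<^sub>R (matrix h *v (z t - \<theta>)))"
        using that ex by (intro sum.cong refl) (metis add_left_imp_eq)
      also have "\<dots> = matrix h *v (\<Sum>t\<in>{1..CARD('d)}. g t v *\<^sub>R (z t - \<theta>))"
        by (simp add: linear_sum[OF matrix_vector_mul_linear] matrix_vector_mult_scaleR)
      also have "\<dots> = matrix h *v v" using gs by metis
      finally show ?thesis .
    qed
    then show ?thesis using matrix_eq by blast
  qed
  have "?P (THE J. ?P J)" by (rule theI[of ?P, OF ex un])
  then show ?thesis unfolding interpJ_def .
qed

lemma mv_bound:
  fixes A :: "real^'d^'n"
  shows "norm (A *v x) \<le> real CARD('n) * norm A * norm x"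
proof -
  have "norm (A *v x) \<le> (\<Sum>i\<in>UNIV. \<bar>(A *v x) $ i\<bar>)" by (rule norm_le_l1_cart)
  also have "\<dots> \<le> (\<Sum>i\<in>(UNIV::'n set). norm A * norm x)"
  proof (rule sum_mono)
    fix i
    have "\<bar>(A *v x) $ i\<bar> \<le> norm (A $ i) * norm x"
      by (simp add: matrix_mult_dot Cauchy_Schwarz_ineq2)
    also have "\<dots> \<le> norm A * norm x" by (intro mult_right_mono Finite_Cartesian_Product.norm_nth_le) simp
    finally show "\<bar>(A *v x) $ i\<bar> \<le> norm A * norm x" .
  qed
  finally show ?thesis by simp
qed

lemma mat_bound:
  fixes A :: "real^'d^'n"
  assumes "\<And>h. norm (A *v h) \<le> K * norm h"
  shows "norm A \<le> real CARD('n) * (real CARD('d) * K)"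
proof -
  have "norm A \<le> (\<Sum>i\<in>UNIV. norm (A $ i))" unfolding norm_vec_def by (rule L2_set_le_sum) simp
  also have "\<dots> \<le> (\<Sum>i\<in>(UNIV::'n set). real CARD('d) * K)"
  proof (rule sum_mono)
    fix i
    have "norm (A $ i) \<le> (\<Sum>j\<in>UNIV. \<bar>A $ i $ j\<bar>)" by (rule norm_le_l1_cart)
    also have "\<dots> \<le> (\<Sum>j\<in>(UNIV::'d set). K)"
    proof (rule sum_mono)
      fix j
      have "A $ i $ j = (A *v axis j 1) $ i"
        by (simp add: matrix_vector_mult_basis column_def)
      then have "\<bar>A $ i $ j\<bar> \<le> norm (A *v axis j 1)" using component_le_norm_cart by metis
      also have "\<dots> \<le> K" using assms[of "axis j 1"] by simp
      finally show "\<bar>A $ i $ j\<bar> \<le> K" .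
    qed
    finally show "norm (A $ i) \<le> real CARD('d) * K" by simp
  qed
  finally show ?thesis by simp
qed


lemma tri1: fixes a b d :: "'a::real_normed_vector"
  shows "norm (a - b + d) \<le> norm a + norm b + norm d"
proof -
  have "norm (a - b + d) \<le> norm (a - b) + norm d" by (rule norm_triangle_ineq)
  moreover have "norm (a - b) \<le> norm a + norm b" by (rule norm_triangle_ineq4)
  ultimately show ?thesis by linarith
qed

lemma tri2: fixes a b d :: "'a::real_normed_vector"
  shows "norm (a - b - d) \<le> norm a + norm b + norm d"
proof -
  have "norm (a - b - d) \<le> norm (a - b) + norm d" by (rule norm_triangle_ineq4)
  moreover have "norm (a - b) \<le> norm a + norm b" by (rule norm_triangle_ineq4)
  ultimately show ?thesis by linarith
qed

lemma tri3: fixes a b d :: "'a::real_normed_vector"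
  shows "norm (a + b + d) \<le> norm a + norm b + norm d"
proof -
  have "norm (a + b + d) \<le> norm (a + b) + norm d" by (rule norm_triangle_ineq)
  moreover have "norm (a + b) \<le> norm a + norm b" by (rule norm_triangle_ineq)
  ultimately show ?thesis by linarith
qed

lemma sq_diff:
  fixes p q :: real assumes "p \<ge> 0" "q \<ge> 0"
  shows "\<bar>p\<^sup>2 - q\<^sup>2\<bar> = \<bar>p - q\<bar> * (p + q)"
proof -
  have "p\<^sup>2 - q\<^sup>2 = (p - q) * (p + q)" by (simp add: power2_eq_square algebra_simps)
  then show ?thesis using assms by (simp add: abs_mult)
qed

lemma Edir_eq:
  fixes a b :: "real^'n" and J D :: "real^'d^'n" and th w :: "real^'d" and r :: "real^'d \<Rightarrow> real^'n"
  assumes j: "J *v (w - th) = b - a"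
  shows "(J - D) *v (w - th) = (b - r w) - (a - r th) + (r (th + (w - th)) - r th - D *v (w - th))"
  by (simp add: matrix_vector_mult_diff_rdistrib j)

theorem lemma1:
  fixes x :: "'n::finite \<Rightarrow> 'b::real_normed_vector"
    and xh xt :: "'n \<Rightarrow> real^'d \<Rightarrow> 'b"
    and \<theta>0 :: "real^'d" and Dmax \<Lambda> c :: real
    and Dr :: "real^'d \<Rightarrow> real^'d^'n"
  assumes A: "assumptionA xh x \<theta>0 Dmax Dr"
    and Dmax_pos: "Dmax > 0" and \<Lambda>_pos: "\<Lambda> > 0" and c_pos: "c > 0"
  shows "\<exists>kef keg kef' keg'. kef > 0 \<and> keg > 0 \<and> kef' > 0 \<and> keg' > 0 \<and>
    (\<forall>\<theta> \<Delta> z. obj xh x \<theta> \<le> obj xh x \<theta>0 \<longrightarrow> 0 < \<Delta> \<longrightarrow> \<Delta> \<le> Dmax \<longrightarrow>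
       interp_set \<theta> z \<longrightarrow> (\<forall>t\<le>CARD('d). norm (z t - \<theta>) \<le> \<Delta>) \<longrightarrow>
       poised \<Lambda> \<theta> \<Delta> z \<longrightarrow>
       (\<forall>t\<le>CARD('d). \<forall>i. norm (xt i (z t) - xh i (z t)) \<le> c * \<Delta>\<^sup>2) \<longrightarrow>
       (let J = interpJ (resid xt x) \<theta> z;
            M = (\<lambda>s. resid xt x \<theta> + J *v s);
            m = (\<lambda>s. (1 / real CARD('n)) * (norm (M s))\<^sup>2)
        in \<forall>s. norm s \<le> \<Delta> \<longrightarrow>
             \<bar>obj xh x (\<theta> + s) - m s\<bar> \<le> kef * \<Delta>\<^sup>2 \<and>
             (\<forall>g1 g2. GDERIV (obj xh x) (\<theta> + s) :> g1 \<longrightarrow> GDERIV m s :> g2 \<longrightarrow>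
                 norm (g1 - g2) \<le> keg * \<Delta>) \<and>
             norm (resid xh x (\<theta> + s) - M s) \<le> kef' * \<Delta>\<^sup>2 \<and>
             norm (Dr (\<theta> + s) - J) \<le> keg' * \<Delta>))"
proof -
  let ?S = "setB xh x \<theta>0 Dmax"
  let ?r = "resid xh x"
  let ?rt = "resid xt x"
  define N where "N = real CARD('n)"
  define D where "D = real CARD('d)"
  have N1: "N \<ge> 1" unfolding N_def using finite_UNIV_card_ge_0[where 'a='n] by simp
  have D1: "D \<ge> 1" unfolding D_def using finite_UNIV_card_ge_0[where 'a='d] by simp
  have bS: "bounded ?S" and dS: "\<And>y. y \<in> ?S \<Longrightarrow> (?r has_derivative (\<lambda>h. Dr y *v h)) (at y)"
    and "\<exists>LJ. \<forall>a\<in>?S. \<forall>b\<in>?S. norm (Dr a - Dr b) \<le> LJ * norm (a - b)"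
    using A unfolding assumptionA_def by auto
  then obtain LJ where LJ: "\<forall>a\<in>?S. \<forall>b\<in>?S. norm (Dr a - Dr b) \<le> LJ * norm (a - b)" by blast
  define L where "L = max LJ 0"
  have L0: "L \<ge> 0" unfolding L_def by simp
  have Lip: "norm (Dr a - Dr b) \<le> L * norm (a - b)" if "a \<in> ?S" "b \<in> ?S" for a b
  proof -
    have "LJ * norm (a - b) \<le> L * norm (a - b)" unfolding L_def by (intro mult_right_mono) auto
    then show ?thesis using LJ that by fastforce
  qed
  have th0S: "\<theta>0 \<in> ?S" unfolding setB_def using Dmax_pos by auto
  obtain e where e: "\<forall>y\<in>?S. dist \<theta>0 y \<le> e" using bS bounded_any_center by blast
  have e0: "e \<ge> 0" using e th0S by fastforce
  define KD where "KD = norm (Dr \<theta>0) + L * e"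
  have KD0: "KD \<ge> 0" unfolding KD_def using L0 e0 by simp
  have KD: "norm (Dr a) \<le> KD" if "a \<in> ?S" for a
  proof -
    have "norm (Dr a) \<le> norm (Dr \<theta>0) + norm (Dr a - Dr \<theta>0)" by (simp add: norm_triangle_sub)
    also have "norm (Dr a - Dr \<theta>0) \<le> L * norm (a - \<theta>0)" using Lip that th0S by blast
    also have "\<dots> \<le> L * e" using e that L0 by (intro mult_left_mono) (auto simp: dist_norm norm_minus_commute)
    finally show ?thesis unfolding KD_def by simp
  qed
  define Rr where "Rr = norm (?r \<theta>0)"
  define LL where "LL = N * L"
  define eps where "eps = N * c"
  define K1 where "K1 = 2 * eps + LL"
  define K2 where "K2 = N * (D * (D * \<Lambda> * K1))"
  define keg' where "keg' = L + K2 + 1"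
  define kef' where "kef' = LL + eps + N * K2 + 1"
  define Ra where "Ra = Rr + N * KD * Dmax + LL * Dmax\<^sup>2"
  define KJ where "KJ = KD + K2 * Dmax"
  define kef where "kef = (1 / N) * kef' * (2 * Ra + kef' * Dmax\<^sup>2) + 1"
  define keg where "keg = 2 * (Ra * keg' + kef' * Dmax * KJ) + 1"
  have LL0: "LL \<ge> 0" unfolding LL_def using N1 L0 by simp
  have eps0: "eps > 0" unfolding eps_def using N1 c_pos by simp
  have K10: "K1 \<ge> 0" unfolding K1_def using LL0 eps0 by simp
  have K20: "K2 \<ge> 0" unfolding K2_def using N1 D1 \<Lambda>_pos K10 by simp
  have keg'0: "keg' > 0" unfolding keg'_def using L0 K20 by simp
  have kef'0: "kef' > 0" unfolding kef'_def using LL0 eps0 K20 N1 mult_nonneg_nonneg[of N K2] by linarith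
  have Ra0: "Ra \<ge> 0" unfolding Ra_def Rr_def using N1 KD0 LL0 Dmax_pos by simp
  have KJ0: "KJ \<ge> 0" unfolding KJ_def using KD0 K20 Dmax_pos by simp
  have kef0: "kef > 0"
  proof -
    have "0 \<le> (1 / N) * kef' * (2 * Ra + kef' * Dmax\<^sup>2)"
      using N1 kef'0 Ra0 by (intro mult_nonneg_nonneg add_nonneg_nonneg) auto
    then show ?thesis unfolding kef_def by linarith
  qed
  have keg0: "keg > 0"
  proof -
    have "0 \<le> 2 * (Ra * keg' + kef' * Dmax * KJ)"
      using Ra0 keg'0 kef'0 Dmax_pos KJ0 by (intro mult_nonneg_nonneg add_nonneg_nonneg) auto
    then show ?thesis unfolding keg_def by linarith
  qed
  have key: "\<forall>\<theta> \<Delta> z. obj xh x \<theta> \<le> obj xh x \<theta>0 \<longrightarrow> 0 < \<Delta> \<longrightarrow> \<Delta> \<le> Dmax \<longrightarrow>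
       interp_set \<theta> z \<longrightarrow> (\<forall>t\<le>CARD('d). norm (z t - \<theta>) \<le> \<Delta>) \<longrightarrow>
       poised \<Lambda> \<theta> \<Delta> z \<longrightarrow>
       (\<forall>t\<le>CARD('d). \<forall>i. norm (xt i (z t) - xh i (z t)) \<le> c * \<Delta>\<^sup>2) \<longrightarrow>
       (\<forall>s. norm s \<le> \<Delta> \<longrightarrow> \<bar>obj xh x (\<theta> + s) - (1 / real CARD('n)) * (norm (?rt \<theta> + interpJ ?rt \<theta> z *v s))\<^sup>2\<bar> \<le> kef * \<Delta>\<^sup>2 \<and>
     (\<forall>g1 g2. GDERIV (obj xh x) (\<theta> + s) :> g1 \<longrightarrow>
        GDERIV (\<lambda>s. (1 / real CARD('n)) * (norm (?rt \<theta> + interpJ ?rt \<theta> z *v s))\<^sup>2) s :> g2 \<longrightarrow>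
        norm (g1 - g2) \<le> keg * \<Delta>) \<and>
     norm (?r (\<theta> + s) - (?rt \<theta> + interpJ ?rt \<theta> z *v s)) \<le> kef' * \<Delta>\<^sup>2 \<and>
     norm (Dr (\<theta> + s) - interpJ ?rt \<theta> z) \<le> keg' * \<Delta>)"
  proof (intro allI impI)
    fix \<theta> :: "real^'d" and \<Delta> :: real and z :: "nat \<Rightarrow> real^'d" and s :: "real^'d"
    assume H1: "obj xh x \<theta> \<le> obj xh x \<theta>0" and H2: "0 < \<Delta>" and H3: "\<Delta> \<le> Dmax"
      and H4: "interp_set \<theta> z" and H5: "\<forall>t\<le>CARD('d). norm (z t - \<theta>) \<le> \<Delta>"
      and H6: "poised \<Lambda> \<theta> \<Delta> z"
      and H7: "\<forall>t\<le>CARD('d). \<forall>i. norm (xt i (z t) - xh i (z t)) \<le> c * \<Delta>\<^sup>2"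
      and H8: "norm s \<le> \<Delta>"
    show "\<bar>obj xh x (\<theta> + s) - (1 / real CARD('n)) * (norm (?rt \<theta> + interpJ ?rt \<theta> z *v s))\<^sup>2\<bar> \<le> kef * \<Delta>\<^sup>2 \<and>
     (\<forall>g1 g2. GDERIV (obj xh x) (\<theta> + s) :> g1 \<longrightarrow>
        GDERIV (\<lambda>s. (1 / real CARD('n)) * (norm (?rt \<theta> + interpJ ?rt \<theta> z *v s))\<^sup>2) s :> g2 \<longrightarrow>
        norm (g1 - g2) \<le> keg * \<Delta>) \<and>
     norm (?r (\<theta> + s) - (?rt \<theta> + interpJ ?rt \<theta> z *v s)) \<le> kef' * \<Delta>\<^sup>2 \<and>
     norm (Dr (\<theta> + s) - interpJ ?rt \<theta> z) \<le> keg' * \<Delta>"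
  proof -
    define J where "J = interpJ ?rt \<theta> z"
    define E where "E = J - Dr \<theta>"
    have Dpos: "0 \<le> \<Delta>" using H2 by simp
    have inS: "\<theta> + v \<in> ?S" if "norm v \<le> Dmax" for v
      unfolding setB_def using H1 that by auto
    have inS': "y \<in> ?S" if "norm (y - \<theta>) \<le> Dmax" for y
      using inS[OF that] by simp
    have thS: "\<theta> \<in> ?S" using inS[of 0] Dmax_pos by simp
    \<comment> \<open>Taylor bound\<close>
    have tay: "norm (?r (\<theta> + v) - ?r \<theta> - Dr \<theta> *v v) \<le> LL * (norm v)\<^sup>2" if v: "norm v \<le> Dmax" for v
    proof -
      let ?C = "cball \<theta> (norm v)"
      let ?f = "\<lambda>y. ?r y - Dr \<theta> *v y"
      have CS: "y \<in> ?S" if "y \<in> ?C" for y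
        using that v by (intro inS') (auto simp: dist_norm norm_minus_commute)
      have der: "(?f has_derivative (\<lambda>h. Dr y *v h - Dr \<theta> *v h)) (at y within ?C)" if "y \<in> ?C" for y
        by (rule has_derivative_at_withinI, rule has_derivative_diff[OF dS[OF CS[OF that]]
            bounded_linear_imp_has_derivative[OF matrix_vector_mul_bounded_linear]])
      have onb: "onorm (\<lambda>h. Dr y *v h - Dr \<theta> *v h) \<le> LL * norm v" if "y \<in> ?C" for y
      proof (rule onorm_le)
        fix h
        have "norm (Dr y *v h - Dr \<theta> *v h) = norm ((Dr y - Dr \<theta>) *v h)"
          by (simp add: matrix_vector_mult_diff_rdistrib)
        also have "\<dots> \<le> N * norm (Dr y - Dr \<theta>) * norm h" unfolding N_def by (rule mv_bound)
        also have "\<dots> \<le> N * (L * norm v) * norm h"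
        proof -
          have "norm (Dr y - Dr \<theta>) \<le> L * norm (y - \<theta>)" using Lip CS[OF that] thS by blast
          also have "\<dots> \<le> L * norm v" using that L0
            by (intro mult_left_mono) (auto simp: dist_norm norm_minus_commute)
          finally show ?thesis using N1 by (intro mult_right_mono mult_left_mono) auto
        qed
        finally show "norm (Dr y *v h - Dr \<theta> *v h) \<le> LL * norm v * norm h"
          unfolding LL_def by (simp add: mult.assoc)
      qed
      have "norm (?f (\<theta> + v) - ?f \<theta>) \<le> LL * norm v * norm (\<theta> + v - \<theta>)"
        by (rule differentiable_bound[OF convex_cball der onb]) (auto simp: dist_norm)
      moreover have "?f (\<theta> + v) - ?f \<theta> = ?r (\<theta> + v) - ?r \<theta> - Dr \<theta> *v v"
        by (simp add: matrix_vector_right_distrib algebra_simps)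
      ultimately show ?thesis by (simp add: power2_eq_square mult.assoc)
    qed
    \<comment> \<open>Lipschitz bound near theta\<close>
    have lipv: "norm (Dr (\<theta> + v) - Dr \<theta>) \<le> L * norm v" if "norm v \<le> Dmax" for v
      using Lip[OF inS[OF that] thS] by simp
    \<comment> \<open>residual at theta\<close>
    have rth: "norm (?r \<theta>) \<le> Rr"
    proof -
      have "(1 / real CARD('n)) * (norm (?r \<theta>))\<^sup>2 \<le> (1 / real CARD('n)) * (norm (?r \<theta>0))\<^sup>2"
        using H1 unfolding obj_def .
      then have "(norm (?r \<theta>))\<^sup>2 \<le> (norm (?r \<theta>0))\<^sup>2"
        by (rule mult_left_le_imp_le) simp
      then show ?thesis unfolding Rr_def by (rule power2_le_imp_le) simp
    qed
    \<comment> \<open>interpolation error\<close>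
    have ierr: "norm (?rt (z t) - ?r (z t)) \<le> eps * \<Delta>\<^sup>2" if "t \<le> CARD('d)" for t
    proof -
      have "norm (?rt (z t) - ?r (z t)) \<le> (\<Sum>i\<in>UNIV. \<bar>(?rt (z t) - ?r (z t)) $ i\<bar>)"
        by (rule norm_le_l1_cart)
      also have "\<dots> \<le> (\<Sum>i\<in>(UNIV::'n set). c * \<Delta>\<^sup>2)"
      proof (rule sum_mono)
        fix i
        have "\<bar>(?rt (z t) - ?r (z t)) $ i\<bar> = \<bar>norm (xt i (z t) - x i) - norm (xh i (z t) - x i)\<bar>"
          by (simp add: resid_def)
        also have "\<dots> \<le> norm ((xt i (z t) - x i) - (xh i (z t) - x i))" by (rule norm_triangle_ineq3)
        also have "\<dots> \<le> c * \<Delta>\<^sup>2" using H7 that by simp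
        finally show "\<bar>(?rt (z t) - ?r (z t)) $ i\<bar> \<le> c * \<Delta>\<^sup>2" .
      qed
      finally show ?thesis unfolding eps_def N_def by simp
    qed
    have z0: "z 0 = \<theta>" using H4 unfolding interp_set_def by simp
    have ierr0: "norm (?rt \<theta> - ?r \<theta>) \<le> eps * \<Delta>\<^sup>2" using ierr[of 0] z0 by simp
    \<comment> \<open>error on interpolation directions\<close>
    have Jp: "\<forall>t\<in>{1..CARD('d)}. ?rt \<theta> + J *v (z t - \<theta>) = ?rt (z t)"
      unfolding J_def by (rule interpJ_prop[OF H4])
    have Edir: "norm (E *v (z t - \<theta>)) \<le> K1 * \<Delta>\<^sup>2" if t: "t \<in> {1..CARD('d)}" for t
    proof -
      have zt: "norm (z t - \<theta>) \<le> \<Delta>" using H5 t by auto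
      have "E *v (z t - \<theta>) = (?rt (z t) - ?r (z t)) - (?rt \<theta> - ?r \<theta>)
          + (?r (\<theta> + (z t - \<theta>)) - ?r \<theta> - Dr \<theta> *v (z t - \<theta>))"
      proof -
        have "?rt \<theta> + J *v (z t - \<theta>) = ?rt (z t)" using Jp t by blast
        then have j: "J *v (z t - \<theta>) = ?rt (z t) - ?rt \<theta>" by (metis add_diff_cancel_left')
        show ?thesis unfolding E_def by (rule Edir_eq[OF j])
      qed
      also have "norm \<dots> \<le> eps * \<Delta>\<^sup>2 + eps * \<Delta>\<^sup>2 + LL * (norm (z t - \<theta>))\<^sup>2"
      proof -
        have tz: "norm (?r (\<theta> + (z t - \<theta>)) - ?r \<theta> - Dr \<theta> *v (z t - \<theta>)) \<le> LL * (norm (z t - \<theta>))\<^sup>2"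
          using zt H3 by (intro tay) simp
        have it: "norm (?rt (z t) - ?r (z t)) \<le> eps * \<Delta>\<^sup>2" using ierr t by simp
        show ?thesis using tri1[of "?rt (z t) - ?r (z t)" "?rt \<theta> - ?r \<theta>" "?r (\<theta> + (z t - \<theta>)) - ?r \<theta> - Dr \<theta> *v (z t - \<theta>)"]
          tz it ierr0 by linarith
      qed
      also have "LL * (norm (z t - \<theta>))\<^sup>2 \<le> LL * \<Delta>\<^sup>2"
        using zt LL0 by (intro mult_left_mono power_mono) auto
      finally show ?thesis unfolding K1_def by (simp add: algebra_simps)
    qed
    \<comment> \<open>operator bound on E\<close>
    obtain g where g1: "\<forall>t. linear (g t)"
      and gd: "\<forall>t\<in>{1..CARD('d)}. \<forall>s\<in>{1..CARD('d)}. g t (z s - \<theta>) = (if s = t then 1 else 0)"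
      and gs: "\<forall>v. v = (\<Sum>t\<in>{1..CARD('d)}. g t v *\<^sub>R (z t - \<theta>))"
      using coords[OF H4] by blast
    have gb: "\<forall>t\<in>{1..CARD('d)}. \<forall>s. norm s \<le> \<Delta> \<longrightarrow> \<bar>g t s\<bar> \<le> \<Lambda>"
      by (rule poised_bound[OF H4 H6 g1 gd])
    have Esm: "norm (E *v v) \<le> D * \<Lambda> * K1 * \<Delta>\<^sup>2" if v: "norm v \<le> \<Delta>" for v
    proof -
      have "E *v v = E *v (\<Sum>t\<in>{1..CARD('d)}. g t v *\<^sub>R (z t - \<theta>))"
        by (rule arg_cong[where f="(*v) E", OF gs[rule_format]])
      also have "\<dots> = (\<Sum>t\<in>{1..CARD('d)}. g t v *\<^sub>R (E *v (z t - \<theta>)))"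
        by (simp add: linear_sum[OF matrix_vector_mul_linear] matrix_vector_mult_scaleR)
      finally have "norm (E *v v) \<le> (\<Sum>t\<in>{1..CARD('d)}. norm (g t v *\<^sub>R (E *v (z t - \<theta>))))"
        using norm_sum[of "\<lambda>t. g t v *\<^sub>R (E *v (z t - \<theta>))" "{1..CARD('d)}"] by simp
      also have "\<dots> \<le> (\<Sum>t\<in>{1..CARD('d)}. \<Lambda> * (K1 * \<Delta>\<^sup>2))"
      proof (rule sum_mono)
        fix t assume t: "t \<in> {1..CARD('d)}"
        have "norm (g t v *\<^sub>R (E *v (z t - \<theta>))) = \<bar>g t v\<bar> * norm (E *v (z t - \<theta>))" by simp
        also have "\<dots> \<le> \<Lambda> * (K1 * \<Delta>\<^sup>2)"
          using gb t v Edir[OF t] \<Lambda>_pos by (intro mult_mono) auto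
        finally show "norm (g t v *\<^sub>R (E *v (z t - \<theta>))) \<le> \<Lambda> * (K1 * \<Delta>\<^sup>2)" .
      qed
      also have "\<dots> = D * \<Lambda> * K1 * \<Delta>\<^sup>2" unfolding D_def by simp
      finally show ?thesis .
    qed
    have Eop: "norm (E *v h) \<le> (D * \<Lambda> * K1 * \<Delta>) * norm h" for h
    proof (cases "h = 0")
      case True then show ?thesis by simp
    next
      case False
      define v where "v = (\<Delta> / norm h) *\<^sub>R h"
      have nv: "norm v = \<Delta>" unfolding v_def using False H2 by simp
      have hv: "h = (norm h / \<Delta>) *\<^sub>R v" unfolding v_def using False H2 by simp
      have "E *v h = (norm h / \<Delta>) *\<^sub>R (E *v v)"
        using arg_cong[OF hv, of "(*v) E"] by (simp only: matrix_vector_mult_scaleR)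
      then have "norm (E *v h) = (norm h / \<Delta>) * norm (E *v v)" using H2 by simp
      also have "\<dots> \<le> (norm h / \<Delta>) * (D * \<Lambda> * K1 * \<Delta>\<^sup>2)"
        using Esm[of v] nv H2 by (intro mult_left_mono) auto
      also have "\<dots> = (D * \<Lambda> * K1 * \<Delta>) * norm h" using H2 by (simp add: power2_eq_square)
      finally show ?thesis .
    qed
    have Enorm: "norm E \<le> K2 * \<Delta>"
    proof -
      have "norm E \<le> real CARD('n) * (real CARD('d) * (D * \<Lambda> * K1 * \<Delta>))" by (rule mat_bound[OF Eop])
      then show ?thesis unfolding K2_def N_def D_def by (simp add: mult.assoc)
    qed
    have sD: "norm s \<le> Dmax" using H8 H3 by simp
    have Jeq: "J = Dr \<theta> + E" unfolding E_def by simp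
    \<comment> \<open>Jacobian error\<close>
    have R4: "norm (Dr (\<theta> + s) - J) \<le> keg' * \<Delta>"
    proof -
      have "Dr (\<theta> + s) - J = (Dr (\<theta> + s) - Dr \<theta>) - E" unfolding E_def by simp
      then have "norm (Dr (\<theta> + s) - J) \<le> norm (Dr (\<theta> + s) - Dr \<theta>) + norm E"
        by (metis norm_triangle_ineq4)
      also have "\<dots> \<le> L * \<Delta> + K2 * \<Delta>"
        using lipv[OF sD] Enorm H8 L0 mult_left_mono[OF H8 L0] by linarith
      also have "\<dots> \<le> keg' * \<Delta>" unfolding keg'_def using H2 by (simp add: algebra_simps)
      finally show ?thesis .
    qed
    have Es: "norm (E *v s) \<le> N * K2 * \<Delta>\<^sup>2"
    proof -
      have "norm (E *v s) \<le> N * norm E * norm s" unfolding N_def by (rule mv_bound)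
      also have "\<dots> \<le> N * (K2 * \<Delta>) * \<Delta>"
        using Enorm H8 N1 K20 H2 by (intro mult_mono) auto
      finally show ?thesis by (simp add: power2_eq_square mult.assoc)
    qed
    have T: "norm (?r (\<theta> + s) - ?r \<theta> - Dr \<theta> *v s) \<le> LL * \<Delta>\<^sup>2"
    proof -
      have "LL * (norm s)\<^sup>2 \<le> LL * \<Delta>\<^sup>2" using H8 LL0 by (intro mult_left_mono power_mono) auto
      then show ?thesis using tay[OF sD] by linarith
    qed
    \<comment> \<open>residual model error\<close>
    have R3: "norm (?r (\<theta> + s) - (?rt \<theta> + J *v s)) \<le> kef' * \<Delta>\<^sup>2"
    proof -
      have "?r (\<theta> + s) - (?rt \<theta> + J *v s) = (?r (\<theta> + s) - ?r \<theta> - Dr \<theta> *v s) - (?rt \<theta> - ?r \<theta>) - E *v s"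
        unfolding E_def by (simp add: matrix_vector_mult_diff_rdistrib algebra_simps)
      then have "norm (?r (\<theta> + s) - (?rt \<theta> + J *v s)) \<le> norm (?r (\<theta> + s) - ?r \<theta> - Dr \<theta> *v s) + norm (?rt \<theta> - ?r \<theta>) + norm (E *v s)"
        by (subst \<open>?r (\<theta> + s) - (?rt \<theta> + J *v s) = _\<close>) (rule tri2)
      also have "\<dots> \<le> LL * \<Delta>\<^sup>2 + eps * \<Delta>\<^sup>2 + N * K2 * \<Delta>\<^sup>2" using T ierr0 Es by linarith
      also have "\<dots> \<le> kef' * \<Delta>\<^sup>2" unfolding kef'_def by (simp add: algebra_simps)
      finally show ?thesis .
    qed
    \<comment> \<open>bound on the residual\<close>
    have Rab: "norm (?r (\<theta> + s)) \<le> Ra"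
    proof -
      have eq: "?r \<theta> + Dr \<theta> *v s + (?r (\<theta> + s) - ?r \<theta> - Dr \<theta> *v s) = ?r (\<theta> + s)" by simp
      have "norm (?r \<theta> + Dr \<theta> *v s + (?r (\<theta> + s) - ?r \<theta> - Dr \<theta> *v s)) \<le> norm (?r \<theta>) + norm (Dr \<theta> *v s) + norm (?r (\<theta> + s) - ?r \<theta> - Dr \<theta> *v s)"
        by (rule tri3)
      then have "norm (?r (\<theta> + s)) \<le> norm (?r \<theta>) + norm (Dr \<theta> *v s) + norm (?r (\<theta> + s) - ?r \<theta> - Dr \<theta> *v s)"
        by (simp only: eq)
      moreover have "norm (Dr \<theta> *v s) \<le> N * KD * Dmax"
      proof -
        have "norm (Dr \<theta> *v s) \<le> N * norm (Dr \<theta>) * norm s" unfolding N_def by (rule mv_bound)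
        also have "\<dots> \<le> N * KD * Dmax" using KD[OF thS] sD N1 KD0 by (intro mult_mono) auto
        finally show ?thesis .
      qed
      moreover have "LL * \<Delta>\<^sup>2 \<le> LL * Dmax\<^sup>2" using H2 H3 LL0 by (intro mult_left_mono power_mono) auto
      ultimately show ?thesis using rth T unfolding Ra_def by linarith
    qed
    \<comment> \<open>function value error\<close>
    have R1: "\<bar>obj xh x (\<theta> + s) - (1 / real CARD('n)) * (norm (?rt \<theta> + J *v s))\<^sup>2\<bar> \<le> kef * \<Delta>\<^sup>2"
    proof -
      let ?a = "?r (\<theta> + s)" and ?b = "?rt \<theta> + J *v s"
      have d: "norm (?a - ?b) \<le> kef' * \<Delta>\<^sup>2" by (rule R3)
      have dD: "kef' * \<Delta>\<^sup>2 \<le> kef' * Dmax\<^sup>2" using H2 H3 kef'0 by (intro mult_left_mono power_mono) auto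
      have nb: "norm ?b \<le> norm ?a + norm (?a - ?b)" by (metis norm_triangle_sub norm_minus_commute)
      have "\<bar>(norm ?a)\<^sup>2 - (norm ?b)\<^sup>2\<bar> = \<bar>norm ?a - norm ?b\<bar> * (norm ?a + norm ?b)"
        by (rule sq_diff) simp_all
      also have "\<dots> \<le> norm (?a - ?b) * (2 * Ra + kef' * Dmax\<^sup>2)"
        using norm_triangle_ineq3[of ?a ?b] nb Rab d dD by (intro mult_mono) auto
      also have "\<dots> \<le> kef' * \<Delta>\<^sup>2 * (2 * Ra + kef' * Dmax\<^sup>2)"
        using d Ra0 kef'0 by (intro mult_right_mono) auto
      finally have "\<bar>(norm ?a)\<^sup>2 - (norm ?b)\<^sup>2\<bar> \<le> kef' * \<Delta>\<^sup>2 * (2 * Ra + kef' * Dmax\<^sup>2)" .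
      then have "(1 / N) * \<bar>(norm ?a)\<^sup>2 - (norm ?b)\<^sup>2\<bar> \<le> (1 / N) * (kef' * \<Delta>\<^sup>2 * (2 * Ra + kef' * Dmax\<^sup>2))"
        using N1 by (intro mult_left_mono) auto
      also have "\<dots> \<le> kef * \<Delta>\<^sup>2" unfolding kef_def by (simp add: algebra_simps)
      finally have fin: "(1 / N) * \<bar>(norm ?a)\<^sup>2 - (norm ?b)\<^sup>2\<bar> \<le> kef * \<Delta>\<^sup>2" .
      have eqq: "obj xh x (\<theta> + s) - (1 / real CARD('n)) * (norm ?b)\<^sup>2 = (1 / N) * ((norm ?a)\<^sup>2 - (norm ?b)\<^sup>2)"
        unfolding obj_def N_def by (simp add: right_diff_distrib)
      have N0: "\<bar>1 / N\<bar> = 1 / N" using N1 by simp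
      show ?thesis unfolding eqq abs_mult N0 by (rule fin)
    qed
    have Jn: "norm J \<le> KJ"
    proof -
      have "norm J \<le> norm (Dr \<theta>) + norm E" unfolding Jeq by (rule norm_triangle_ineq)
      also have "\<dots> \<le> KD + K2 * Dmax"
        using KD[OF thS] Enorm mult_left_mono[OF H3 K20] by linarith
      finally show ?thesis unfolding KJ_def .
    qed
    have R2: "\<forall>g1 g2. GDERIV (obj xh x) (\<theta> + s) :> g1 \<longrightarrow>
        GDERIV (\<lambda>s. (1 / real CARD('n)) * (norm (?rt \<theta> + J *v s))\<^sup>2) s :> g2 \<longrightarrow>
        norm (g1 - g2) \<le> keg * \<Delta>"
    proof (intro allI impI)
      fix g1 g2
      assume G1: "GDERIV (obj xh x) (\<theta> + s) :> g1"
        and G2: "GDERIV (\<lambda>s. (1 / real CARD('n)) * (norm (?rt \<theta> + J *v s))\<^sup>2) s :> g2"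
      let ?y = "\<theta> + s"
      let ?a = "?r ?y" and ?b = "?rt \<theta> + J *v s"
      have yS: "?y \<in> ?S" using inS[OF sD] .
      have fo: "obj xh x = (\<lambda>y. (1 / N) * (?r y \<bullet> ?r y))"
        by (rule ext) (simp add: obj_def N_def power2_norm_eq_inner)
      have d1: "((\<lambda>y. (1 / N) * (?r y \<bullet> ?r y)) has_derivative
          (\<lambda>h. (1 / N) * (?a \<bullet> (Dr ?y *v h) + (Dr ?y *v h) \<bullet> ?a))) (at ?y)"
        by (intro has_derivative_mult_right has_derivative_inner dS[OF yS])
      have dM0: "((\<lambda>s. ?rt \<theta> + J *v s) has_derivative (\<lambda>h. 0 + J *v h)) (at s)"
        by (rule has_derivative_add[OF has_derivative_const
              bounded_linear_imp_has_derivative[OF matrix_vector_mul_bounded_linear]])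
      have dM: "((\<lambda>s. ?rt \<theta> + J *v s) has_derivative (\<lambda>h. J *v h)) (at s)"
        using dM0 by simp
      have fm: "(\<lambda>s. (1 / real CARD('n)) * (norm (?rt \<theta> + J *v s))\<^sup>2) =
          (\<lambda>s. (1 / N) * ((?rt \<theta> + J *v s) \<bullet> (?rt \<theta> + J *v s)))"
        by (rule ext) (simp add: N_def power2_norm_eq_inner)
      have d2: "((\<lambda>s. (1 / N) * ((?rt \<theta> + J *v s) \<bullet> (?rt \<theta> + J *v s))) has_derivative
          (\<lambda>h. (1 / N) * (?b \<bullet> (J *v h) + (J *v h) \<bullet> ?b))) (at s)"
        by (intro has_derivative_mult_right has_derivative_inner dM)
      have u1: "(\<lambda>h. h \<bullet> g1) = (\<lambda>h. (1 / N) * (?a \<bullet> (Dr ?y *v h) + (Dr ?y *v h) \<bullet> ?a))"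
        using G1 d1 unfolding gderiv_def fo by (rule has_derivative_unique)
      have u2: "(\<lambda>h. h \<bullet> g2) = (\<lambda>h. (1 / N) * (?b \<bullet> (J *v h) + (J *v h) \<bullet> ?b))"
        using G2 d2 unfolding gderiv_def fm by (rule has_derivative_unique)
      define w where "w = g1 - g2"
      have e1: "w \<bullet> g1 = (2 / N) * (?a \<bullet> (Dr ?y *v w))"
        using fun_cong[OF u1, of w] by (simp add: inner_commute)
      have e2: "w \<bullet> g2 = (2 / N) * (?b \<bullet> (J *v w))"
        using fun_cong[OF u2, of w] by (simp add: inner_commute)
      have split: "?a \<bullet> (Dr ?y *v w) - ?b \<bullet> (J *v w) = ?a \<bullet> ((Dr ?y - J) *v w) + (?a - ?b) \<bullet> (J *v w)"
        by (simp add: matrix_vector_mult_diff_rdistrib inner_diff_left inner_diff_right)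
      have P1: "\<bar>?a \<bullet> ((Dr ?y - J) *v w)\<bar> \<le> Ra * (N * (keg' * \<Delta>) * norm w)"
      proof -
        have "\<bar>?a \<bullet> ((Dr ?y - J) *v w)\<bar> \<le> norm ?a * norm ((Dr ?y - J) *v w)" by (rule Cauchy_Schwarz_ineq2)
        also have "\<dots> \<le> Ra * (N * norm (Dr ?y - J) * norm w)"
          using Rab mv_bound[of "Dr ?y - J" w] Ra0 unfolding N_def by (intro mult_mono) auto
        also have "\<dots> \<le> Ra * (N * (keg' * \<Delta>) * norm w)"
          using R4 Ra0 N1 by (intro mult_left_mono mult_right_mono) auto
        finally show ?thesis .
      qed
      have P2: "\<bar>(?a - ?b) \<bullet> (J *v w)\<bar> \<le> (kef' * \<Delta>\<^sup>2) * (N * KJ * norm w)"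
      proof -
        have "\<bar>(?a - ?b) \<bullet> (J *v w)\<bar> \<le> norm (?a - ?b) * norm (J *v w)" by (rule Cauchy_Schwarz_ineq2)
        also have "\<dots> \<le> (kef' * \<Delta>\<^sup>2) * (N * norm J * norm w)"
          using R3 mv_bound[of J w] kef'0 unfolding N_def by (intro mult_mono) auto
        also have "\<dots> \<le> (kef' * \<Delta>\<^sup>2) * (N * KJ * norm w)"
          using Jn kef'0 N1 by (intro mult_left_mono mult_right_mono) auto
        finally show ?thesis .
      qed
      have "(norm w)\<^sup>2 = w \<bullet> g1 - w \<bullet> g2" by (simp add: power2_norm_eq_inner w_def inner_diff_right)
      also have "\<dots> = (2 / N) * (?a \<bullet> ((Dr ?y - J) *v w) + (?a - ?b) \<bullet> (J *v w))"
        unfolding e1 e2 split[symmetric] by (simp add: right_diff_distrib)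
      also have "\<dots> \<le> (2 / N) * (Ra * (N * (keg' * \<Delta>) * norm w) + (kef' * \<Delta>\<^sup>2) * (N * KJ * norm w))"
        using P1 P2 N1 by (intro mult_left_mono) auto
      also have "\<dots> = 2 * (Ra * keg' + kef' * \<Delta> * KJ) * \<Delta> * norm w"
        using N1 by (simp add: field_simps power2_eq_square)
      also have "\<dots> \<le> 2 * (Ra * keg' + kef' * Dmax * KJ) * \<Delta> * norm w"
      proof -
        have "kef' * \<Delta> * KJ \<le> kef' * Dmax * KJ"
          using H3 kef'0 KJ0 by (intro mult_right_mono mult_left_mono) auto
        then show ?thesis using H2 by (intro mult_right_mono) auto
      qed
      also have "\<dots> \<le> keg * \<Delta> * norm w"
        unfolding keg_def using H2 by (intro mult_right_mono) auto
      finally have sq: "(norm w)\<^sup>2 \<le> keg * \<Delta> * norm w" .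
      show "norm (g1 - g2) \<le> keg * \<Delta>"
      proof (cases "norm w = 0")
        case True
        then show ?thesis using keg0 H2 unfolding w_def by simp
      next
        case False
        then have "norm w > 0" by simp
        then show ?thesis using sq unfolding w_def power2_eq_square by simp
      qed
    qed
    show ?thesis unfolding J_def[symmetric] by (intro conjI R1 R2 R3 R4)
  qed
  qed
  show ?thesis unfolding Let_def
    by (intro exI[of _ kef] exI[of _ keg] exI[of _ kef'] exI[of _ keg'] conjI kef0 keg0 kef'0 keg'0 key)
qed

end
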